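(* Let $T$ be an attack-defence tree and $\llbracket T\rrbracket$ its encoding in the rewrite theory $\mathcal{R}_{ADT}$ described in the context. If the minimal time to perform the main (root) attack in $T$ is $t$, then there exist $a$, $SA$ and $SD$ such that $\mathcal{R}_{ADT} \vdash \llbracket T\rrbracket \to^{!} [a,t,SA,SD]$.
   Context: An attack-defence tree (ADTree) $T$ is a tree whose leaves are attack actions (each with a time and a cost) or defence actions, and whose inner nodes are gates: OR (unordered children, succeeds iff some child succeeds), AND (unordered children in parallel, succeeds iff all succeed), SAND (ordered children executed sequentially), and NOT (single child, succeeds iff the child fails; encodes counter-defence gates). Gates may carry their own time and cost. The time of an attack on the root is computed bottom-up: maximum over AND children, sum over SAND children, the chosen child for OR, plus each gate's own time. Rewrite theory $\mathcal{R}_{ADT}$: each node is an object with attributes time, cost, agents (1 for attack leaves, 0 for gates), accumulated time acctime and cost (initially 0), a set used, its children, and a status in $\{\mathrm{Unknown},\mathrm{Succeed},\mathrm{Fail}\}$ initially Unknown; $\llbracket T\rrbracket=\{Q;Cnf\}$ with $Q$ the root and $Cnf$ the multiset of node objects. Rules: Unknown attack/defence leaves may become Succeed or Fail. OR: a Succeed pending child $o$ makes the Unknown gate Succeed, empties its pending children, records $o$ in used, sets acctime/cost to the gate's own plus $o$'s accumulated values and agents to $o$'s; Fail children are removed; no pending children makes it Fail. AND: Succeed children are removed from pending and recorded, acctime combined by max and agents by sum; a Fail child makes it Fail; no pending children makes it Succeed. SAND: a Succeed first child is removed and recorded, acctime combined by sum and agents by max; failing first child gives Fail; empty list gives Succeed.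 NOT: child Succeed gives Fail, child Fail gives Succeed. END: when the root is Succeed, $\{Q;Cnf\}$ rewrites to the summary term $[a,t,SA,SD]$ of the root's agents $a$, accumulated time $t$, the set $SA$ of used attacks and the set $SD$ of active defences. $\mathcal{R}\vdash u\to^{!}u'$ means $u$ rewrites in zero or more steps to an irreducible $u'$. *)

theory Defs
  imports Main
begin

type_synonym name = nat

text \<open>Leaves: attack actions (name, time, cost) and defence actions (name).
  Gates: OR, AND, SAND with their own time and cost and a list of children,
  NOT (counter-defence gate) with own time and cost and a single child.\<close>
datatype adt =
    Atk name nat nat
  | Dfn name
  | Or nat nat "adt list"
  | And nat nat "adt list"
  | Sand nat nat "adt list"
  | Not nat nat adt

text \<open>\<open>succ T t\<close>: the root of \<open>T\<close> can be achieved by an attack of time \<open>t\<close>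
  (for some outcome of the leaves); \<open>fails T\<close>: the root of \<open>T\<close> can fail.\<close>
inductive succ :: "adt \<Rightarrow> nat \<Rightarrow> bool" and fails :: "adt \<Rightarrow> bool" where
  succ_atk: "succ (Atk n t c) t"
| fails_atk: "fails (Atk n t c)"
| succ_dfn: "succ (Dfn n) 0"
| fails_dfn: "fails (Dfn n)"
| succ_or: "i < length cs \<Longrightarrow> succ (cs ! i) ti \<Longrightarrow> succ (Or t c cs) (t + ti)"
| fails_or: "(\<forall>i < length cs. fails (cs ! i)) \<Longrightarrow> fails (Or t c cs)"
| succ_and: "length ts = length cs \<Longrightarrow> (\<forall>i < length cs. succ (cs ! i) (ts ! i))
     \<Longrightarrow> succ (And t c cs) (t + fold max ts 0)"
| fails_and: "i < length cs \<Longrightarrow> fails (cs ! i) \<Longrightarrow> fails (And t c cs)"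
| succ_sand: "length ts = length cs \<Longrightarrow> (\<forall>i < length cs. succ (cs ! i) (ts ! i))
     \<Longrightarrow> succ (Sand t c cs) (t + sum_list ts)"
| fails_sand: "i < length cs \<Longrightarrow> fails (cs ! i) \<Longrightarrow> fails (Sand t c cs)"
| succ_not: "fails x \<Longrightarrow> succ (Not t c x) t"
| fails_not: "succ x tx \<Longrightarrow> fails (Not t c x)"

definition min_attack_time :: "adt \<Rightarrow> nat \<Rightarrow> bool" where
  "min_attack_time T t \<longleftrightarrow> succ T t \<and> (\<forall>t'. succ T t' \<longrightarrow> t \<le> t')"

datatype status = Unknown | Succeed | Fail

datatype kind = KAtk name | KDfn name | KOr | KAnd | KSand | KNot

text \<open>A node object: kind, time, cost, agents, acctime, acccost, used (attacks used),
  active defences, status, its children (objects, indexed by position = object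
  identifier relative to the parent) and the pending children (list of indices).\<close>
datatype obj = Obj
  (okind: kind) (otime: nat) (ocost: nat) (oagents: nat) (oacctime: nat) (oacccost: nat)
  (oused: "name set") (odefs: "name set") (ostatus: status)
  (ochildren: "obj list") (opending: "nat list")

fun enc :: "adt \<Rightarrow> obj" where
  "enc (Atk n t c) = Obj (KAtk n) t c 1 0 0 {} {} Unknown [] []"
| "enc (Dfn n) = Obj (KDfn n) 0 0 0 0 0 {} {} Unknown [] []"
| "enc (Or t c cs) = Obj KOr t c 0 0 0 {} {} Unknown (map enc cs) [0..<length cs]"
| "enc (And t c cs) = Obj KAnd t c 0 0 0 {} {} Unknown (map enc cs) [0..<length cs]"
| "enc (Sand t c cs) = Obj KSand t c 0 0 0 {} {} Unknown (map enc cs) [0..<length cs]"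
| "enc (Not t c x) = Obj KNot t c 0 0 0 {} {} Unknown [enc x] [0]"

inductive node_step :: "obj \<Rightarrow> obj \<Rightarrow> bool" where
  atk_succ: "node_step (Obj (KAtk n) t c a at ac u d Unknown ch p)
                       (Obj (KAtk n) t c a t c {n} d Succeed ch p)"
| atk_fail: "node_step (Obj (KAtk n) t c a at ac u d Unknown ch p)
                       (Obj (KAtk n) t c a at ac u d Fail ch p)"
| dfn_succ: "node_step (Obj (KDfn n) t c a at ac u d Unknown ch p)
                       (Obj (KDfn n) t c a at ac u {n} Succeed ch p)"
| dfn_fail: "node_step (Obj (KDfn n) t c a at ac u d Unknown ch p)
                       (Obj (KDfn n) t c a at ac u d Fail ch p)"
| or_succ: "i \<in> set p \<Longrightarrow> i < length ch \<Longrightarrow> ostatus (ch ! i) = Succeed \<Longrightarrow>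
     node_step (Obj KOr t c a at ac u d Unknown ch p)
       (Obj KOr t c (oagents (ch ! i)) (t + oacctime (ch ! i)) (c + oacccost (ch ! i))
            (oused (ch ! i)) (odefs (ch ! i)) Succeed ch [])"
| or_rm: "i \<in> set p \<Longrightarrow> i < length ch \<Longrightarrow> ostatus (ch ! i) = Fail \<Longrightarrow>
     node_step (Obj KOr t c a at ac u d Unknown ch p)
       (Obj KOr t c a at ac u d Unknown ch (removeAll i p))"
| or_fail: "node_step (Obj KOr t c a at ac u d Unknown ch [])
       (Obj KOr t c a at ac u d Fail ch [])"
| and_rm: "i \<in> set p \<Longrightarrow> i < length ch \<Longrightarrow> ostatus (ch ! i) = Succeed \<Longrightarrow>
     node_step (Obj KAnd t c a at ac u d Unknown ch p)
       (Obj KAnd t c (a + oagents (ch ! i)) (max at (oacctime (ch ! i))) (ac + oacccost (ch ! i))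
            (u \<union> oused (ch ! i)) (d \<union> odefs (ch ! i)) Unknown ch (removeAll i p))"
| and_fail: "i \<in> set p \<Longrightarrow> i < length ch \<Longrightarrow> ostatus (ch ! i) = Fail \<Longrightarrow>
     node_step (Obj KAnd t c a at ac u d Unknown ch p)
       (Obj KAnd t c a at ac u d Fail ch p)"
| and_succ: "node_step (Obj KAnd t c a at ac u d Unknown ch [])
       (Obj KAnd t c a (t + at) (c + ac) u d Succeed ch [])"
| sand_rm: "i < length ch \<Longrightarrow> ostatus (ch ! i) = Succeed \<Longrightarrow>
     node_step (Obj KSand t c a at ac u d Unknown ch (i # p))
       (Obj KSand t c (max a (oagents (ch ! i))) (at + oacctime (ch ! i)) (ac + oacccost (ch ! i))
            (u \<union> oused (ch ! i)) (d \<union> odefs (ch ! i)) Unknown ch p)"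
| sand_fail: "i < length ch \<Longrightarrow> ostatus (ch ! i) = Fail \<Longrightarrow>
     node_step (Obj KSand t c a at ac u d Unknown ch (i # p))
       (Obj KSand t c a at ac u d Fail ch (i # p))"
| sand_succ: "node_step (Obj KSand t c a at ac u d Unknown ch [])
       (Obj KSand t c a (t + at) (c + ac) u d Succeed ch [])"
| not_fail: "ostatus x = Succeed \<Longrightarrow>
     node_step (Obj KNot t c a at ac u d Unknown [x] p)
       (Obj KNot t c a at ac u d Fail [x] p)"
| not_succ: "ostatus x = Fail \<Longrightarrow>
     node_step (Obj KNot t c a at ac u d Unknown [x] p)
       (Obj KNot t c 0 t c {} d Succeed [x] p)"

inductive obj_step :: "obj \<Rightarrow> obj \<Rightarrow> bool" where
  here: "node_step o1 o2 \<Longrightarrow> obj_step o1 o2"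
| inside: "i < length ch \<Longrightarrow> obj_step (ch ! i) x' \<Longrightarrow>
     obj_step (Obj k t c a at ac u d s ch p) (Obj k t c a at ac u d s (ch[i := x']) p)"

text \<open>Top-level terms: a configuration \<open>{Q;Cnf}\<close> or a summary \<open>[a,t,SA,SD]\<close>.\<close>
datatype rterm = Conf obj | Summary nat nat "name set" "name set"

inductive rstep :: "rterm \<Rightarrow> rterm \<Rightarrow> bool" where
  conf: "obj_step o1 o2 \<Longrightarrow> rstep (Conf o1) (Conf o2)"
| END: "ostatus q = Succeed \<Longrightarrow>
     rstep (Conf q) (Summary (oagents q) (oacctime q) (oused q) (odefs q))"

definition encode :: "adt \<Rightarrow> rterm" where
  "encode T = Conf (enc T)"

text \<open>\<open>u \<rightarrow>! u'\<close>: rewriting in zero or more steps to an irreducible term.\<close>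
definition rewrites_nf :: "rterm \<Rightarrow> rterm \<Rightarrow> bool" where
  "rewrites_nf u u' \<longleftrightarrow> rstep\<^sup>*\<^sup>* u u' \<and> (\<nexists>v. rstep u' v)"

end

theory Submission
  imports Defs
begin

abbreviation ostar :: "obj \<Rightarrow> obj \<Rightarrow> bool" where "ostar \<equiv> obj_step\<^sup>*\<^sup>*"

inductive_cases succ_AtkE: "succ (Atk n tt cc) x"
inductive_cases succ_DfnE: "succ (Dfn n) x"
inductive_cases succ_OrE: "succ (Or tt cc cs) x"
inductive_cases succ_AndE: "succ (And tt cc cs) x"
inductive_cases succ_SandE: "succ (Sand tt cc cs) x"
inductive_cases succ_NotE: "succ (Not tt cc y) x"
inductive_cases fails_OrE: "fails (Or tt cc cs)"
inductive_cases fails_AndE: "fails (And tt cc cs)"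
inductive_cases fails_SandE: "fails (Sand tt cc cs)"
inductive_cases fails_NotE: "fails (Not tt cc y)"

lemma lift1:
  assumes "ostar x y" "i < length ch"
  shows "ostar (Obj k t c a at ac u d s (ch[i:=x]) p) (Obj k t c a at ac u d s (ch[i:=y]) p)"
  using assms
proof (induction rule: rtranclp_induct)
  case base then show ?case by simp
next
  case (step y z)
  have "obj_step (Obj k t c a at ac u d s (ch[i:=y]) p) (Obj k t c a at ac u d s ((ch[i:=y])[i:=z]) p)"
    by (rule obj_step.inside) (use step in auto)
  then show ?case using step by simp
qed

lemma lift1':
  assumes "ostar (ch!i) y" "i < length ch"
  shows "ostar (Obj k t c a at ac u d s ch p) (Obj k t c a at ac u d s (ch[i:=y]) p)"
  using lift1[OF assms, of k t c a at ac u d s p] by simp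

lemma liftall:
  assumes "length ds = length cs" "\<forall>i<length cs. ostar (cs!i) (ds!i)"
  shows "ostar (Obj k t c a at ac u d s cs p) (Obj k t c a at ac u d s ds p)"
proof -
  have "n \<le> length cs \<Longrightarrow> ostar (Obj k t c a at ac u d s cs p) (Obj k t c a at ac u d s (take n ds @ drop n cs) p)" for n
  proof (induction n)
    case 0 then show ?case by simp
  next
    case (Suc n)
    let ?l = "take n ds @ drop n cs"
    have nth: "?l ! n = cs ! n" using Suc assms by (simp add: nth_append)
    have upd: "?l[n := ds!n] = take (Suc n) ds @ drop (Suc n) cs"
      using Suc.prems assms
      by (simp add: list_update_append take_Suc_conv_app_nth Cons_nth_drop_Suc[symmetric] min_def)
    have "ostar (Obj k t c a at ac u d s ?l p) (Obj k t c a at ac u d s (?l[n := ds!n]) p)"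
      by (rule lift1') (use Suc.prems assms nth in auto)
    then show ?case using Suc upd by (metis (no_types, lifting) Suc_leD rtranclp_trans)
  qed
  from this[of "length cs"] assms show ?thesis by simp
qed

lemma choose_list:
  assumes "\<forall>i<n. \<exists>x. Q i x"
  shows "\<exists>ds. length ds = n \<and> (\<forall>i<n. Q i (ds!i))"
proof -
  let ?ds = "map (\<lambda>i. SOME x. Q i x) [0..<n]"
  have "\<forall>i<n. Q i (?ds!i)" using assms by (auto intro: someI_ex)
  then show ?thesis by (intro exI[of _ ?ds]) simp
qed

lemma or_remove:
  assumes "distinct p" "\<forall>i\<in>set p. i < length ds \<and> ostatus (ds!i) = Fail"
  shows "ostar (Obj KOr t c a at ac u d Unknown ds p) (Obj KOr t c a at ac u d Unknown ds [])"
  using assms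
proof (induction p)
  case Nil then show ?case by simp
next
  case (Cons i p)
  have "obj_step (Obj KOr t c a at ac u d Unknown ds (i#p)) (Obj KOr t c a at ac u d Unknown ds (removeAll i (i#p)))"
    by (rule obj_step.here, rule node_step.or_rm) (use Cons in auto)
  moreover have "removeAll i (i#p) = p" using Cons by simp
  ultimately show ?case using Cons by (metis converse_rtranclp_into_rtranclp distinct.simps(2) list.set_intros(2))
qed

lemma and_remove:
  assumes "distinct p" "\<forall>i\<in>set p. i < length ds \<and> ostatus (ds!i) = Succeed"
  shows "\<exists>a' ac' u' d'. ostar (Obj KAnd t c a at ac u d Unknown ds p)
     (Obj KAnd t c a' (fold max (map (\<lambda>i. oacctime (ds!i)) p) at) ac' u' d' Unknown ds [])"
  using assms
proof (induction p arbitrary: a at ac u d)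
  case Nil then show ?case by auto
next
  case (Cons i p)
  let ?x = "ds!i"
  have st: "obj_step (Obj KAnd t c a at ac u d Unknown ds (i#p))
     (Obj KAnd t c (a + oagents ?x) (max at (oacctime ?x)) (ac + oacccost ?x)
            (u \<union> oused ?x) (d \<union> odefs ?x) Unknown ds (removeAll i (i#p)))"
    by (rule obj_step.here, rule node_step.and_rm) (use Cons in auto)
  have r: "removeAll i (i#p) = p" using Cons by simp
  obtain a' ac' u' d' where
    "ostar (Obj KAnd t c (a + oagents ?x) (max at (oacctime ?x)) (ac + oacccost ?x)
            (u \<union> oused ?x) (d \<union> odefs ?x) Unknown ds p)
     (Obj KAnd t c a' (fold max (map (\<lambda>i. oacctime (ds!i)) p) (max at (oacctime ?x))) ac' u' d' Unknown ds [])"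
    using Cons.IH[of "a + oagents ?x" "max at (oacctime ?x)" "ac + oacccost ?x" "u \<union> oused ?x" "d \<union> odefs ?x"] Cons.prems by auto
  with st r have "ostar (Obj KAnd t c a at ac u d Unknown ds (i#p))
     (Obj KAnd t c a' (fold max (map (\<lambda>i. oacctime (ds!i)) p) (max at (oacctime ?x))) ac' u' d' Unknown ds [])"
    by (metis converse_rtranclp_into_rtranclp)
  then show ?case by (auto simp: max.commute)
qed

lemma sand_remove:
  assumes "\<forall>i\<in>set p. i < length ds \<and> ostatus (ds!i) = Succeed"
  shows "\<exists>a' ac' u' d'. ostar (Obj KSand t c a at ac u d Unknown ds (p @ q))
     (Obj KSand t c a' (at + sum_list (map (\<lambda>i. oacctime (ds!i)) p)) ac' u' d' Unknown ds q)"
  using assms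
proof (induction p arbitrary: a at ac u d)
  case Nil then show ?case by auto
next
  case (Cons i p)
  let ?x = "ds!i"
  have st: "obj_step (Obj KSand t c a at ac u d Unknown ds (i#(p@q)))
     (Obj KSand t c (max a (oagents ?x)) (at + oacctime ?x) (ac + oacccost ?x)
            (u \<union> oused ?x) (d \<union> odefs ?x) Unknown ds (p@q))"
    by (rule obj_step.here, rule node_step.sand_rm) (use Cons in auto)
  obtain a' ac' u' d' where
    "ostar (Obj KSand t c (max a (oagents ?x)) (at + oacctime ?x) (ac + oacccost ?x)
            (u \<union> oused ?x) (d \<union> odefs ?x) Unknown ds (p@q))
     (Obj KSand t c a' (at + oacctime ?x + sum_list (map (\<lambda>i. oacctime (ds!i)) p)) ac' u' d' Unknown ds q)"
    using Cons.IH[of "max a (oagents ?x)" "at + oacctime ?x" "ac + oacccost ?x" "u \<union> oused ?x" "d \<union> odefs ?x"] Cons.prems by auto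
  with st have "ostar (Obj KSand t c a at ac u d Unknown ds ((i#p)@q))
     (Obj KSand t c a' (at + oacctime ?x + sum_list (map (\<lambda>i. oacctime (ds!i)) p)) ac' u' d' Unknown ds q)"
    by (metis append_Cons converse_rtranclp_into_rtranclp)
  then show ?case by (auto simp: add.assoc)
qed

lemma total: "(\<exists>t. succ T t) \<or> fails T"
proof (induction T)
  case (Atk x1 x2 x3) then show ?case using fails_atk by blast
next
  case (Dfn x) then show ?case using fails_dfn by blast
next
  case (Or t c cs)
  show ?case
  proof (cases "\<forall>i<length cs. fails (cs!i)")
    case True then show ?thesis by (blast intro: fails_or)
  next
    case False
    then obtain i where "i < length cs" "\<not> fails (cs!i)" by blast
    with Or obtain ti where "succ (cs!i) ti" by (meson nth_mem)
    then show ?thesis using \<open>i < length cs\<close> by (blast intro: succ_or)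
  qed
next
  case (And t c cs)
  show ?case
  proof (cases "\<exists>i<length cs. fails (cs!i)")
    case True then show ?thesis by (blast intro: fails_and)
  next
    case False
    then have "\<forall>i<length cs. \<exists>ti. succ (cs!i) ti" using And by (meson nth_mem)
    then obtain ts where "length ts = length cs" "\<forall>i<length cs. succ (cs!i) (ts!i)"
      using choose_list[of "length cs" "\<lambda>i ti. succ (cs!i) ti"] by blast
    then show ?thesis by (blast intro: succ_and)
  qed
next
  case (Sand t c cs)
  show ?case
  proof (cases "\<exists>i<length cs. fails (cs!i)")
    case True then show ?thesis by (blast intro: fails_sand)
  next
    case False
    then have "\<forall>i<length cs. \<exists>ti. succ (cs!i) ti" using Sand by (meson nth_mem)
    then obtain ts where "length ts = length cs" "\<forall>i<length cs. succ (cs!i) (ts!i)"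
      using choose_list[of "length cs" "\<lambda>i ti. succ (cs!i) ti"] by blast
    then show ?thesis by (blast intro: succ_sand)
  qed
next
  case (Not t c x)
  then show ?case by (blast intro: succ_not fails_not)
qed

definition SOK :: "adt \<Rightarrow> nat \<Rightarrow> bool" where
  "SOK T t \<longleftrightarrow> (\<exists>x. ostar (enc T) x \<and> ostatus x = Succeed \<and> oacctime x = t)"
definition FOK :: "adt \<Rightarrow> bool" where
  "FOK T \<longleftrightarrow> (\<exists>x. ostar (enc T) x \<and> ostatus x = Fail)"

lemma main: "(\<forall>t. succ T t \<longrightarrow> SOK T t) \<and> (fails T \<longrightarrow> FOK T)"
proof (induction T)
  case (Atk n tt cc)
  have "obj_step (enc (Atk n tt cc)) (Obj (KAtk n) tt cc 1 tt cc {n} {} Succeed [] [])"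
    by (auto intro!: obj_step.here node_step.atk_succ)
  moreover have "obj_step (enc (Atk n tt cc)) (Obj (KAtk n) tt cc 1 0 0 {} {} Fail [] [])"
    by (auto intro!: obj_step.here node_step.atk_fail)
  ultimately show ?case unfolding SOK_def FOK_def
    by (auto elim!: succ_AtkE; meson r_into_rtranclp obj.sel)
next
  case (Dfn n)
  have "obj_step (enc (Dfn n)) (Obj (KDfn n) 0 0 0 0 0 {} {n} Succeed [] [])"
    by (auto intro!: obj_step.here node_step.dfn_succ)
  moreover have "obj_step (enc (Dfn n)) (Obj (KDfn n) 0 0 0 0 0 {} {} Fail [] [])"
    by (auto intro!: obj_step.here node_step.dfn_fail)
  ultimately show ?case unfolding SOK_def FOK_def
    by (auto elim!: succ_DfnE; meson r_into_rtranclp obj.sel)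
next
  case (Or tt cc cs)
  have S: "SOK (Or tt cc cs) x" if "succ (Or tt cc cs) x" for x
  proof -
    from that obtain i ti where i: "i < length cs" "succ (cs!i) ti" "x = tt + ti"
      by (auto elim!: succ_OrE)
    then obtain y where y: "ostar (enc (cs!i)) y" "ostatus y = Succeed" "oacctime y = ti"
      using Or.IH[of "cs!i"] unfolding SOK_def by (meson nth_mem)
    let ?ch = "(map enc cs)[i := y]"
    have 1: "ostar (enc (Or tt cc cs)) (Obj KOr tt cc 0 0 0 {} {} Unknown ?ch [0..<length cs])"
      using lift1'[of "map enc cs" i y] y i by simp
    have "obj_step (Obj KOr tt cc 0 0 0 {} {} Unknown ?ch [0..<length cs])
       (Obj KOr tt cc (oagents (?ch ! i)) (tt + oacctime (?ch ! i)) (cc + oacccost (?ch ! i))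
            (oused (?ch ! i)) (odefs (?ch ! i)) Succeed ?ch [])"
      by (rule obj_step.here, rule node_step.or_succ) (use i y in auto)
    with 1 have "ostar (enc (Or tt cc cs)) (Obj KOr tt cc (oagents (?ch ! i)) (tt + oacctime (?ch ! i)) (cc + oacccost (?ch ! i))
            (oused (?ch ! i)) (odefs (?ch ! i)) Succeed ?ch [])" by simp
    then show ?thesis unfolding SOK_def using i y by (intro exI) auto
  qed
  have F: "FOK (Or tt cc cs)" if "fails (Or tt cc cs)"
  proof -
    from that have "\<forall>i<length cs. fails (cs!i)" by (auto elim!: fails_OrE)
    then have "\<forall>i<length cs. \<exists>y. ostar (enc (cs!i)) y \<and> ostatus y = Fail"
      using Or.IH unfolding FOK_def by (meson nth_mem)
    then obtain ds where ds: "length ds = length cs" "\<forall>i<length cs. ostar (enc (cs!i)) (ds!i) \<and> ostatus (ds!i) = Fail"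
      using choose_list[of "length cs" "\<lambda>i y. ostar (enc (cs!i)) y \<and> ostatus y = Fail"] by blast
    have 1: "ostar (enc (Or tt cc cs)) (Obj KOr tt cc 0 0 0 {} {} Unknown ds [0..<length cs])"
      using liftall[of ds "map enc cs"] ds by simp
    have 2: "ostar (Obj KOr tt cc 0 0 0 {} {} Unknown ds [0..<length cs]) (Obj KOr tt cc 0 0 0 {} {} Unknown ds [])"
      by (rule or_remove) (use ds in auto)
    have 3: "obj_step (Obj KOr tt cc 0 0 0 {} {} Unknown ds []) (Obj KOr tt cc 0 0 0 {} {} Fail ds [])"
      by (rule obj_step.here, rule node_step.or_fail)
    from 1 2 3 show ?thesis unfolding FOK_def
      by (meson obj.sel rtranclp.rtrancl_into_rtrancl rtranclp_trans)
  qed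
  from S F show ?case by blast
next
  case (And tt cc cs)
  have S: "SOK (And tt cc cs) x" if "succ (And tt cc cs) x" for x
  proof -
    from that obtain ts where ts: "length ts = length cs" "\<forall>i<length cs. succ (cs!i) (ts!i)" "x = tt + fold max ts 0"
      by (auto elim!: succ_AndE)
    then have "\<forall>i<length cs. \<exists>y. ostar (enc (cs!i)) y \<and> ostatus y = Succeed \<and> oacctime y = ts!i"
      using And.IH unfolding SOK_def by (meson nth_mem)
    then obtain ds where ds: "length ds = length cs" "\<forall>i<length cs. ostar (enc (cs!i)) (ds!i) \<and> ostatus (ds!i) = Succeed \<and> oacctime (ds!i) = ts!i"
      using choose_list[of "length cs" "\<lambda>i y. ostar (enc (cs!i)) y \<and> ostatus y = Succeed \<and> oacctime y = ts!i"] by blast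
    have 1: "ostar (enc (And tt cc cs)) (Obj KAnd tt cc 0 0 0 {} {} Unknown ds [0..<length cs])"
      using liftall[of ds "map enc cs"] ds by simp
    obtain a' ac' u' d' where 2: "ostar (Obj KAnd tt cc 0 0 0 {} {} Unknown ds [0..<length cs])
       (Obj KAnd tt cc a' (fold max (map (\<lambda>i. oacctime (ds!i)) [0..<length cs]) 0) ac' u' d' Unknown ds [])"
      using and_remove[of "[0..<length cs]" ds tt cc 0 0 0 "{}" "{}"] ds by auto
    have m: "map (\<lambda>i. oacctime (ds!i)) [0..<length cs] = ts"
      using ds ts by (intro nth_equalityI) auto
    have 3: "obj_step (Obj KAnd tt cc a' (fold max ts 0) ac' u' d' Unknown ds [])
      (Obj KAnd tt cc a' (tt + fold max ts 0) (cc + ac') u' d' Succeed ds [])"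
      by (rule obj_step.here, rule node_step.and_succ)
    from 1 2 3 m ts show ?thesis unfolding SOK_def
      by (metis (no_types, lifting) obj.sel rtranclp.rtrancl_into_rtrancl rtranclp_trans)
  qed
  have F: "FOK (And tt cc cs)" if "fails (And tt cc cs)"
  proof -
    from that obtain i where i: "i < length cs" "fails (cs!i)" by (auto elim!: fails_AndE)
    then obtain y where y: "ostar (enc (cs!i)) y" "ostatus y = Fail"
      using And.IH[of "cs!i"] unfolding FOK_def by (meson nth_mem)
    let ?ch = "(map enc cs)[i := y]"
    have 1: "ostar (enc (And tt cc cs)) (Obj KAnd tt cc 0 0 0 {} {} Unknown ?ch [0..<length cs])"
      using lift1'[of "map enc cs" i y] y i by simp
    have "obj_step (Obj KAnd tt cc 0 0 0 {} {} Unknown ?ch [0..<length cs])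
       (Obj KAnd tt cc 0 0 0 {} {} Fail ?ch [0..<length cs])"
      by (rule obj_step.here, rule node_step.and_fail) (use i y in auto)
    with 1 show ?thesis unfolding FOK_def
      by (meson obj.sel rtranclp.rtrancl_into_rtrancl)
  qed
  from S F show ?case by blast
next
  case (Sand tt cc cs)
  have S: "SOK (Sand tt cc cs) x" if "succ (Sand tt cc cs) x" for x
  proof -
    from that obtain ts where ts: "length ts = length cs" "\<forall>i<length cs. succ (cs!i) (ts!i)" "x = tt + sum_list ts"
      by (auto elim!: succ_SandE)
    then have "\<forall>i<length cs. \<exists>y. ostar (enc (cs!i)) y \<and> ostatus y = Succeed \<and> oacctime y = ts!i"
      using Sand.IH unfolding SOK_def by (meson nth_mem)
    then obtain ds where ds: "length ds = length cs" "\<forall>i<length cs. ostar (enc (cs!i)) (ds!i) \<and> ostatus (ds!i) = Succeed \<and> oacctime (ds!i) = ts!i"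
      using choose_list[of "length cs" "\<lambda>i y. ostar (enc (cs!i)) y \<and> ostatus y = Succeed \<and> oacctime y = ts!i"] by blast
    have 1: "ostar (enc (Sand tt cc cs)) (Obj KSand tt cc 0 0 0 {} {} Unknown ds [0..<length cs])"
      using liftall[of ds "map enc cs"] ds by simp
    obtain a' ac' u' d' where 2: "ostar (Obj KSand tt cc 0 0 0 {} {} Unknown ds ([0..<length cs] @ []))
       (Obj KSand tt cc a' (0 + sum_list (map (\<lambda>i. oacctime (ds!i)) [0..<length cs])) ac' u' d' Unknown ds [])"
      using sand_remove[of "[0..<length cs]" ds tt cc 0 0 0 "{}" "{}" "[]"] ds by auto
    have m: "map (\<lambda>i. oacctime (ds!i)) [0..<length cs] = ts"
      using ds ts by (intro nth_equalityI) auto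
    have 3: "obj_step (Obj KSand tt cc a' (sum_list ts) ac' u' d' Unknown ds [])
      (Obj KSand tt cc a' (tt + sum_list ts) (cc + ac') u' d' Succeed ds [])"
      by (rule obj_step.here, rule node_step.sand_succ)
    from 1 2 3 m ts show ?thesis unfolding SOK_def
      by (metis (no_types, lifting) obj.sel rtranclp.rtrancl_into_rtrancl rtranclp_trans append_Nil2 add_0)
  qed
  have F: "FOK (Sand tt cc cs)" if "fails (Sand tt cc cs)"
  proof -
    from that obtain i where i: "i < length cs" "fails (cs!i)" by (auto elim!: fails_SandE)
    define j where "j = (LEAST j. j < length cs \<and> fails (cs!j))"
    have j: "j < length cs" "fails (cs!j)" using LeastI[of "\<lambda>j. j < length cs \<and> fails (cs!j)" i] i j_def by auto
    have jl: "\<not> fails (cs!k)" if "k < j" for k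
      using not_less_Least[of k "\<lambda>j. j < length cs \<and> fails (cs!j)"] that j j_def by auto
    have "\<forall>k<length cs. \<exists>y. ostar (enc (cs!k)) y \<and> (k < j \<longrightarrow> ostatus y = Succeed) \<and> (k = j \<longrightarrow> ostatus y = Fail)"
    proof (intro allI impI)
      fix k assume k: "k < length cs"
      show "\<exists>y. ostar (enc (cs!k)) y \<and> (k < j \<longrightarrow> ostatus y = Succeed) \<and> (k = j \<longrightarrow> ostatus y = Fail)"
      proof (cases "k < j")
        case True
        then obtain tk where "succ (cs!k) tk" using jl total by blast
        then obtain y where "ostar (enc (cs!k)) y" "ostatus y = Succeed" using Sand.IH[of "cs!k"] k unfolding SOK_def by (meson nth_mem)
        then show ?thesis using True by auto
      next
        case False
        show ?thesis
        proof (cases "k = j")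
          case True
          then have "\<exists>y. ostar (enc (cs!j)) y \<and> ostatus y = Fail" using Sand.IH[of "cs!j"] j unfolding FOK_def by (meson nth_mem)
          then show ?thesis using True by auto
        next
          case False
          then show ?thesis using \<open>\<not> k < j\<close> by (intro exI[of _ "enc (cs!k)"]) auto
        qed
      qed
    qed
    then obtain ds where ds: "length ds = length cs" "\<forall>k<length cs. ostar (enc (cs!k)) (ds!k) \<and> (k < j \<longrightarrow> ostatus (ds!k) = Succeed) \<and> (k = j \<longrightarrow> ostatus (ds!k) = Fail)"
      using choose_list[of "length cs" "\<lambda>k y. ostar (enc (cs!k)) y \<and> (k < j \<longrightarrow> ostatus y = Succeed) \<and> (k = j \<longrightarrow> ostatus y = Fail)"] by blast
    have 1: "ostar (enc (Sand tt cc cs)) (Obj KSand tt cc 0 0 0 {} {} Unknown ds [0..<length cs])"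
      using liftall[of ds "map enc cs"] ds by simp
    have sp: "[0..<length cs] = [0..<j] @ (j # [Suc j..<length cs])"
      using j(1) by (metis le_add_diff_inverse less_imp_le_nat upt_add_eq_append upt_conv_Cons zero_le)
    obtain a' at' ac' u' d' where 2: "ostar (Obj KSand tt cc 0 0 0 {} {} Unknown ds ([0..<j] @ (j # [Suc j..<length cs])))
       (Obj KSand tt cc a' at' ac' u' d' Unknown ds (j # [Suc j..<length cs]))"
      using sand_remove[of "[0..<j]" ds tt cc 0 0 0 "{}" "{}" "j # [Suc j..<length cs]"] ds j by auto
    have 3: "obj_step (Obj KSand tt cc a' at' ac' u' d' Unknown ds (j # [Suc j..<length cs]))
      (Obj KSand tt cc a' at' ac' u' d' Fail ds (j # [Suc j..<length cs]))"
      by (rule obj_step.here, rule node_step.sand_fail) (use ds j in auto)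
    from 1 2 3 sp show ?thesis unfolding FOK_def
      by (metis (no_types, lifting) obj.sel rtranclp.rtrancl_into_rtrancl rtranclp_trans)
  qed
  from S F show ?case by blast
next
  case (Not tt cc x)
  have S: "SOK (Not tt cc x) s" if "succ (Not tt cc x) s" for s
  proof -
    from that have "fails x" "s = tt" by (auto elim!: succ_NotE)
    then obtain y where y: "ostar (enc x) y" "ostatus y = Fail" using Not.IH unfolding FOK_def by blast
    have 1: "ostar (enc (Not tt cc x)) (Obj KNot tt cc 0 0 0 {} {} Unknown [y] [0])"
      using lift1'[of "[enc x]" 0 y] y by simp
    have "obj_step (Obj KNot tt cc 0 0 0 {} {} Unknown [y] [0]) (Obj KNot tt cc 0 tt cc {} {} Succeed [y] [0])"
      by (rule obj_step.here, rule node_step.not_succ) (use y in auto)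
    with 1 \<open>s = tt\<close> show ?thesis unfolding SOK_def by (meson obj.sel rtranclp.rtrancl_into_rtrancl)
  qed
  have F: "FOK (Not tt cc x)" if "fails (Not tt cc x)"
  proof -
    from that obtain tx where "succ x tx" by (auto elim!: fails_NotE)
    then obtain y where y: "ostar (enc x) y" "ostatus y = Succeed" using Not.IH unfolding SOK_def by blast
    have 1: "ostar (enc (Not tt cc x)) (Obj KNot tt cc 0 0 0 {} {} Unknown [y] [0])"
      using lift1'[of "[enc x]" 0 y] y by simp
    have "obj_step (Obj KNot tt cc 0 0 0 {} {} Unknown [y] [0]) (Obj KNot tt cc 0 0 0 {} {} Fail [y] [0])"
      by (rule obj_step.here, rule node_step.not_fail) (use y in auto)
    with 1 show ?thesis unfolding FOK_def by (meson obj.sel rtranclp.rtrancl_into_rtrancl)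
  qed
  from S F show ?case by blast
qed

lemma conf_star: "ostar x y \<Longrightarrow> rstep\<^sup>*\<^sup>* (Conf x) (Conf y)"
  by (induction rule: rtranclp_induct) (auto intro: rtranclp.rtrancl_into_rtrancl rstep.conf)

theorem theorem2:
  fixes T :: adt and t :: nat
  assumes "min_attack_time T t"
  shows "\<exists>a SA SD. rewrites_nf (encode T) (Summary a t SA SD)"
proof -
  from assms have "succ T t" unfolding min_attack_time_def by blast
  then obtain x where x: "ostar (enc T) x" "ostatus x = Succeed" "oacctime x = t"
    using main[of T] unfolding SOK_def by blast
  have "rstep\<^sup>*\<^sup>* (encode T) (Summary (oagents x) t (oused x) (odefs x))"
    using conf_star[OF x(1)] rstep.END[OF x(2)] x(3) unfolding encode_def
    by (metis rtranclp.rtrancl_into_rtrancl)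
  moreover have "\<nexists>v. rstep (Summary a t' SA SD) v" for a t' SA SD
    by (auto elim: rstep.cases)
  ultimately show ?thesis unfolding rewrites_nf_def by blast
qed

end
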